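(* For every integer $n\geq 5$ and every $p>1$, $$\lambda_{1,p}(T_{n,4})>\lambda_{1,p}(T_{n,3}).$$
   Context: For $n>i\ge 3$, the tadpole graph $T_{n,i}$ is the graph on vertices $t_1,\dots,t_n$ with edges $t_n\sim t_{n-1}\sim\cdots\sim t_i\sim t_{i-1}\sim\cdots\sim t_2\sim t_1\sim t_i$ (a cycle of length $i$ with a path attached at $t_i$). For a finite connected graph $G$, $B(G)=\{x\in V(G):\deg x=1\}$, $C_B(G)=\{f\in\mathbb{R}^{V(G)}: f|_{B(G)}\equiv0\}$, and $$\lambda_{1,p}(G)=\min_{f\in C_B(G)\setminus\{0\}}\frac{\sum_{\{x,y\}\in E(G)}|f(x)-f(y)|^p}{\sum_{x\in V(G)}|f(x)|^p}.$$ *)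

theory Defs
  imports Complex_Main
begin

definition degree :: "'a set set \<Rightarrow> 'a \<Rightarrow> nat" where
  "degree E x = card {e \<in> E. x \<in> e}"

definition boundary :: "'a set \<Rightarrow> 'a set set \<Rightarrow> 'a set" where
  "boundary V E = {x \<in> V. degree E x = 1}"

definition CB :: "'a set \<Rightarrow> 'a set set \<Rightarrow> ('a \<Rightarrow> real) set" where
  "CB V E = {f. \<forall>x \<in> boundary V E. f x = 0}"

definition rayleigh :: "'a set \<Rightarrow> 'a set set \<Rightarrow> real \<Rightarrow> ('a \<Rightarrow> real) \<Rightarrow> real" where
  "rayleigh V E p f =
     (\<Sum>e\<in>E. (\<Sum>x\<in>e. \<Sum>y\<in>e. if x \<noteq> y then \<bar>f x - f y\<bar> powr p else 0) / 2)
     / (\<Sum>x\<in>V. \<bar>f x\<bar> powr p)"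

text \<open>For an edge e = {x,y} the inner double sum counts |f x - f y|^p twice, hence the division by 2.\<close>

definition lambda1p :: "'a set \<Rightarrow> 'a set set \<Rightarrow> real \<Rightarrow> real" where
  "lambda1p V E p = Inf {rayleigh V E p f | f. f \<in> CB V E \<and> (\<exists>x\<in>V. f x \<noteq> 0)}"

text \<open>Tadpole graph T_{n,i}: vertices t_1..t_n (as 1..n), path n-(n-1)-...-1 plus edge 1-i.\<close>
definition tadpole_V :: "nat \<Rightarrow> nat set" where
  "tadpole_V n = {1..n}"

definition tadpole_E :: "nat \<Rightarrow> nat \<Rightarrow> nat set set" where
  "tadpole_E n i = {{k, k + 1} | k. 1 \<le> k \<and> k < n} \<union> {{1, i}}"

end

theory Submission
  imports Defs "HOL-Analysis.Analysis"
begin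

definition Dn :: "nat \<Rightarrow> real \<Rightarrow> (nat \<Rightarrow> real) \<Rightarrow> real" where
  "Dn n p f = (\<Sum>x=1..n. \<bar>f x\<bar> powr p)"

definition N4 :: "nat \<Rightarrow> real \<Rightarrow> (nat \<Rightarrow> real) \<Rightarrow> real" where
  "N4 n p f = \<bar>f 1 - f 2\<bar> powr p + \<bar>f 2 - f 3\<bar> powr p + \<bar>f 3 - f 4\<bar> powr p
     + \<bar>f 1 - f 4\<bar> powr p + (\<Sum>k=4..<n. \<bar>f k - f (Suc k)\<bar> powr p)"

lemma cont_coord: "continuous_on UNIV (\<lambda>f::nat\<Rightarrow>real. f a)"
  by simp

lemma cont_pw: assumes "p > 0" shows "continuous_on UNIV (\<lambda>f::nat\<Rightarrow>real. \<bar>f a - f b\<bar> powr p)"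
  by (rule continuous_on_powr') (use assms in \<open>auto intro!: continuous_intros\<close>)

lemma cont_pw1: assumes "p > 0" shows "continuous_on UNIV (\<lambda>f::nat\<Rightarrow>real. \<bar>f a\<bar> powr p)"
  by (rule continuous_on_powr') (use assms in \<open>auto intro!: continuous_intros\<close>)

lemma cont_N4: assumes "p > 0" shows "continuous_on S (N4 n p)"
  unfolding N4_def
  by (intro continuous_intros continuous_on_subset[OF cont_pw[OF assms]] continuous_on_subset[OF cont_pw1[OF assms]]) auto

lemma cont_Dn: assumes "p > 0" shows "continuous_on UNIV (Dn n p)"
  unfolding Dn_def
  by (intro continuous_intros continuous_on_subset[OF cont_pw1[OF assms]]) auto

definition SS :: "nat \<Rightarrow> real \<Rightarrow> (nat \<Rightarrow> real) set" where
  "SS n p = {f. (\<forall>x. f x \<in> (if x \<in> {1..n} then {-1..1} else {0})) \<and> f n = 0 \<and> Dn n p f = 1}"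

lemma compact_SS: assumes "p > 0" shows "compact (SS n p)"
proof -
  let ?C = "\<lambda>x::nat. if x \<in> {1..n} then {-1..1::real} else {0}"
  have K: "compact (PiE UNIV ?C)"
  proof -
    have "compactin (product_topology (\<lambda>i. euclidean) UNIV) (PiE UNIV ?C)"
      by (subst compactin_PiE) auto
    then show ?thesis by (simp add: euclidean_product_topology)
  qed
  have c1: "closed {f::nat\<Rightarrow>real. f n = 0}"
    by (rule closed_Collect_eq) (auto intro: continuous_intros)
  have c2: "closed {f::nat\<Rightarrow>real. Dn n p f = 1}"
    by (rule closed_Collect_eq) (auto intro: continuous_intros cont_Dn assms)
  have "SS n p = PiE UNIV ?C \<inter> ({f. f n = 0} \<inter> {f. Dn n p f = 1})"
    unfolding SS_def PiE_def Pi_def extensional_def by blast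
  then show ?thesis using K c1 c2 by (simp add: compact_Int_closed closed_Int)
qed

lemma tadpole_E_eq: "tadpole_E n i = (\<lambda>k. {k, Suc k}) ` {1..<n} \<union> {{1,i}}"
  unfolding tadpole_E_def by auto

lemma sumE:
  assumes "3 \<le> i"
  shows "(\<Sum>e\<in>tadpole_E n i. G e) = (\<Sum>k=1..<n. G {k, Suc k}) + G {1,i}"
proof -
  have inj: "inj_on (\<lambda>k. {k, Suc k}) {1..<n}"
  proof (rule inj_onI)
    fix x y :: nat assume "{x, Suc x} = {y, Suc y}"
    then have "x \<in> {y, Suc y}" "y \<in> {x, Suc x}" by (metis insertI1)+
    then show "x = y" by auto
  qed
  have nin: "{1,i} \<notin> (\<lambda>k. {k, Suc k}) ` {1..<n}"
  proof
    assume "{1,i} \<in> (\<lambda>k. {k, Suc k}) ` {1..<n}"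
    then obtain k where "{1,i} = {k, Suc k}" "k \<ge> 1" by force
    then have "1 \<in> {k, Suc k}" "i \<in> {k, Suc k}" by (metis insertI1 insertI2)+
    then show False using assms \<open>k \<ge> 1\<close> by auto
  qed
  have "(\<Sum>e\<in>tadpole_E n i. G e) = sum G ((\<lambda>k. {k, Suc k}) ` {1..<n}) + G {1,i}"
    unfolding tadpole_E_eq using nin by (subst sum.union_disjoint) (simp_all add: finite_imageI)
  also have "sum G ((\<lambda>k. {k, Suc k}) ` {1..<n}) = (\<Sum>k=1..<n. G {k, Suc k})"
    by (rule sum.reindex[OF inj, unfolded comp_def])
  finally show ?thesis .
qed

lemma edge_term: "x \<noteq> y \<Longrightarrow> (\<Sum>a\<in>{x,y}. \<Sum>b\<in>{x,y}. if a \<noteq> b then \<bar>f a - f b\<bar> powr p else 0) / 2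
   = \<bar>f x - f y\<bar> powr (p::real)"
  by (simp add: abs_minus_commute)

lemma rayleigh_tad:
  assumes "3 \<le> i"
  shows "rayleigh (tadpole_V n) (tadpole_E n i) p f
     = ((\<Sum>k=1..<n. \<bar>f k - f (Suc k)\<bar> powr p) + \<bar>f 1 - f i\<bar> powr p) / Dn n p f"
proof -
  have i1: "(1::nat) \<noteq> i" using assms by simp
  show ?thesis
    unfolding rayleigh_def sumE[OF assms] Dn_def tadpole_V_def edge_term[OF i1]
    by (simp add: edge_term abs_minus_commute)
qed

lemma finite_E: "finite (tadpole_E n i)"
  unfolding tadpole_E_eq by simp

lemma deg2: assumes "e1 \<in> E" "e2 \<in> E" "e1 \<noteq> e2" "x \<in> e1" "x \<in> e2" "finite E"
  shows "Defs.degree E x \<noteq> 1"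
proof -
  have "{e1,e2} \<subseteq> {e\<in>E. x \<in> e}" using assms by auto
  then have "card {e1,e2} \<le> card {e\<in>E. x \<in> e}" using assms(6) by (intro card_mono) auto
  then show ?thesis using assms(3) unfolding Defs.degree_def by auto
qed

lemma boundary_tad:
  assumes "3 \<le> i" "i < n"
  shows "boundary (tadpole_V n) (tadpole_E n i) = {n}"
proof -
  have dn: "Defs.degree (tadpole_E n i) n = 1"
  proof -
    have "{e\<in>tadpole_E n i. n \<in> e} = {{n-1, n}}"
    proof (rule set_eqI, rule iffI)
      fix e assume "e \<in> {e\<in>tadpole_E n i. n \<in> e}"
      then have eE: "e \<in> tadpole_E n i" and ne: "n \<in> e" by auto
      from eE consider k where "k \<in> {1..<n}" "e = {k, Suc k}" | "e = {1,i}"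
        unfolding tadpole_E_eq by force
      then show "e \<in> {{n-1, n}}"
      proof cases
        case 1
        then have "Suc k = n" using ne by auto
        then show ?thesis using 1 by auto
      next
        case 2
        then show ?thesis using ne assms by auto
      qed
    next
      fix e assume "e \<in> {{n-1, n}}"
      then have "e = {n-1, Suc (n-1)}" using assms by auto
      moreover have "{n-1, Suc (n-1)} \<in> tadpole_E n i"
        unfolding tadpole_E_eq using assms by (intro UnI1 imageI) auto
      ultimately show "e \<in> {e\<in>tadpole_E n i. n \<in> e}" using assms by auto
    qed
    then show ?thesis unfolding Defs.degree_def by simp
  qed
  have other: "Defs.degree (tadpole_E n i) x \<noteq> 1" if "1 \<le> x" "x < n" for x
  proof (cases "x = 1")
    case True
    have e1: "{1, Suc 1} \<in> tadpole_E n i" using assms unfolding tadpole_E_eq by (intro UnI1 imageI) auto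
    have e2: "{1, i} \<in> tadpole_E n i" unfolding tadpole_E_eq by auto
    have ne: "{1, Suc 1} \<noteq> {1::nat, i}"
    proof
      assume "{1, Suc 1} = {1::nat, i}"
      then have "i \<in> {1, Suc 1}" by (metis insertI1 insertI2)
      then show False using assms by auto
    qed
    show ?thesis using deg2[OF e1 e2 ne _ _ finite_E, of x] True by simp
  next
    case False
    have e1: "{x-1, Suc (x-1)} \<in> tadpole_E n i" using that False unfolding tadpole_E_eq
      by (intro UnI1 imageI) auto
    have e2: "{x, Suc x} \<in> tadpole_E n i" using that unfolding tadpole_E_eq by (intro UnI1 imageI) auto
    have ne: "{x-1, Suc (x-1)} \<noteq> {x, Suc x}"
    proof
      assume "{x-1, Suc (x-1)} = {x, Suc x}"
      then have "x - 1 \<in> {x, Suc x}" by (metis insertI1)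
      then show False using False that by auto
    qed
    show ?thesis using deg2[OF e1 e2 ne _ _ finite_E, of x] False that by simp
  qed
  show ?thesis
    unfolding boundary_def tadpole_V_def using dn other assms by fastforce
qed

lemma CB_tad: "3 \<le> i \<Longrightarrow> i < n \<Longrightarrow> CB (tadpole_V n) (tadpole_E n i) = {f. f n = 0}"
  unfolding CB_def by (simp add: boundary_tad)

lemma conv_pow:
  fixes u v s p :: real
  assumes "0 \<le> u" "0 \<le> v" "0 \<le> s" "s \<le> 1" "1 \<le> p"
  shows "(s * u + (1 - s) * v) powr p \<le> s * u powr p + (1-s) * v powr p"
proof -
  consider "u = 0" | "v = 0" | "u > 0" "v > 0" using assms by linarith
  then show ?thesis
  proof cases
    case 1
    have "((1 - s) * v) powr p = (1 - s) powr p * v powr p"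
      using assms by (simp add: powr_mult)
    also have "\<dots> \<le> (1-s) * v powr p"
    proof (cases "s = 1")
      case True then show ?thesis using assms by simp
    next
      case False
      then have "(1-s) powr p \<le> (1-s)" using assms by (intro powr_le_one_le) auto
      then show ?thesis by (intro mult_right_mono) auto
    qed
    finally show ?thesis using 1 assms by simp
  next
    case 2
    have "(s * u) powr p = s powr p * u powr p"
      using assms by (simp add: powr_mult)
    also have "\<dots> \<le> s * u powr p"
    proof (cases "s = 0")
      case True then show ?thesis using assms by simp
    next
      case False
      then have "s powr p \<le> s" using assms by (intro powr_le_one_le) auto
      then show ?thesis by (intro mult_right_mono) auto
    qed
    finally show ?thesis using 2 assms by simp
  next
    case 3
    have "convex_on {0<..} (\<lambda>x. x powr p)" using powr_convex assms(5) by blast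
    from convex_onD[OF this, of "1 - s" u v] 3 assms show ?thesis
      by (simp add: add.commute)
  qed
qed

definition M :: "real \<Rightarrow> real \<Rightarrow> real \<Rightarrow> real" where
  "M p a b = ((a powr p + b powr p) / 2) powr (1/p)"

lemma M_nonneg: "M p a b \<ge> 0" unfolding M_def by simp

lemma M_pow: assumes "p > 0" shows "M p a b powr p = (a powr p + b powr p) / 2"
proof -
  have "M p a b powr p = ((a powr p + b powr p) / 2) powr (1/p * p)"
    unfolding M_def by (simp add: powr_powr)
  also have "\<dots> = (a powr p + b powr p) / 2" using assms by simp
  finally show ?thesis .
qed

lemma pow_root: fixes p x :: real assumes "p > 0" "x \<ge> 0" shows "(x powr p) powr (1/p) = x"
proof -
  have "p * (1/p) = 1" using assms by (auto simp: field_simps)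
  then show ?thesis using assms by (simp add: powr_powr)
qed

lemma M_mono: assumes "p > 0" "0 \<le> a" "a \<le> a'" "0 \<le> b" "b \<le> b'"
  shows "M p a b \<le> M p a' b'"
  unfolding M_def using assms
  by (intro powr_mono2 divide_right_mono add_mono) auto

lemma M_comm: "M p a b = M p b a" unfolding M_def by (simp add: add.commute)

lemma M_zero: assumes "p > 0" "0 \<le> a" "0 \<le> b" "M p a b = 0" shows "a = 0" "b = 0"
proof -
  have "(a powr p + b powr p) / 2 = 0" using M_pow[OF assms(1), of a b] assms(4)
    using assms(1) by simp
  then have "a powr p + b powr p = 0" by simp
  then have "a powr p = 0" "b powr p = 0" using add_nonneg_eq_0_iff[of "a powr p" "b powr p"] by auto
  then show "a = 0" "b = 0" using assms by auto
qed

lemma minkowski: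
  fixes p a b c d :: real
  assumes "1 \<le> p" "0 \<le> a" "0 \<le> b" "0 \<le> c" "0 \<le> d"
  shows "M p (a+c) (b+d) \<le> M p a b + M p c d"
proof -
  have p0: "p > 0" using assms by simp
  define A where "A = M p a b"
  define B where "B = M p c d"
  have A0: "A \<ge> 0" "B \<ge> 0" unfolding A_def B_def by (simp_all add: M_nonneg)
  show ?thesis
  proof (cases "A = 0 \<or> B = 0")
    case True
    then show ?thesis
    proof
      assume "A = 0"
      then have "a = 0" "b = 0" using M_zero[OF p0 assms(2,3)] unfolding A_def by auto
      then show ?thesis using M_nonneg[of p a b] by simp
    next
      assume "B = 0"
      then have "c = 0" "d = 0" using M_zero[OF p0 assms(4,5)] unfolding B_def by auto
      then show ?thesis using M_nonneg[of p c d] by simp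
    qed
  next
    case False
    then have Ap: "A > 0" and Bp: "B > 0" using A0 by auto
    define s where "s = A / (A+B)"
    have s0: "0 \<le> s" "s \<le> 1" using Ap Bp unfolding s_def by auto
    have s1: "1 - s = B / (A+B)" using Ap Bp unfolding s_def by (simp add: field_simps)
    have key: "(x + y) / (A+B) = s * (x/A) + (1-s) * (y/B)" for x y
    proof -
      have "s * (x/A) = x/(A+B)" using Ap Bp unfolding s_def by simp
      moreover have "(1-s) * (y/B) = y/(A+B)" using Ap Bp unfolding s1 by simp
      ultimately show ?thesis by (simp add: add_divide_distrib)
    qed
    have ca: "((a+c)/(A+B)) powr p \<le> s * (a/A) powr p + (1-s) * (c/B) powr p"
      unfolding key using assms Ap Bp s0 by (intro conv_pow) auto
    have cb: "((b+d)/(A+B)) powr p \<le> s * (b/A) powr p + (1-s) * (d/B) powr p"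
      unfolding key using assms Ap Bp s0 by (intro conv_pow) auto
    have Ap': "A powr p = (a powr p + b powr p)/2" unfolding A_def by (rule M_pow[OF p0])
    have Bp': "B powr p = (c powr p + d powr p)/2" unfolding B_def by (rule M_pow[OF p0])
    have "((a+c) powr p + (b+d) powr p)/2 / (A+B) powr p
        = ((((a+c)/(A+B)) powr p + ((b+d)/(A+B)) powr p))/2"
    proof -
      have e1: "((a+c)/(A+B)) powr p = (a+c) powr p / (A+B) powr p"
        using assms Ap Bp by (simp add: powr_divide)
      have e2: "((b+d)/(A+B)) powr p = (b+d) powr p / (A+B) powr p"
        using assms Ap Bp by (simp add: powr_divide)
      have pos: "(A+B) powr p > 0" using Ap Bp by simp
      show ?thesis using e1 e2 pos by (simp add: field_simps)
    qed
    also have "\<dots> \<le> (s * (a/A) powr p + (1-s) * (c/B) powr p + s * (b/A) powr p + (1-s) * (d/B) powr p)/2"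
      using ca cb by simp
    also have "\<dots> = s * (((a powr p + b powr p)/2) / A powr p) + (1-s) * (((c powr p + d powr p)/2) / B powr p)"
      using assms Ap Bp by (simp add: powr_divide field_simps)
    also have "\<dots> = 1" using Ap Bp unfolding Ap'[symmetric] Bp'[symmetric] by simp
    finally have "((a+c) powr p + (b+d) powr p)/2 \<le> (A+B) powr p"
      using Ap Bp by (simp add: divide_le_eq)
    then have "(((a+c) powr p + (b+d) powr p)/2) powr (1/p) \<le> ((A+B) powr p) powr (1/p)"
      using p0 by (intro powr_mono2) auto
    then have "M p (a+c) (b+d) \<le> A + B"
      unfolding M_def using pow_root[OF p0, of "A+B"] A0 by simp
    then show ?thesis unfolding A_def B_def .
  qed
qed

lemma edge_ineq:
  fixes p a b c d :: real
  assumes "1 \<le> p" "0 \<le> a" "0 \<le> b" "0 \<le> c" "0 \<le> d"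
  shows "\<bar>M p a b - M p c d\<bar> powr p \<le> (\<bar>a - c\<bar> powr p + \<bar>b - d\<bar> powr p) / 2"
proof -
  have p0: "p > 0" using assms by simp
  have gen: "\<bar>M p a b - M p c d\<bar> powr p \<le> (\<bar>a - c\<bar> powr p + \<bar>b - d\<bar> powr p) / 2"
    if le: "M p c d \<le> M p a b" and nn: "0 \<le> a" "0 \<le> b" "0 \<le> c" "0 \<le> d" for a b c d
  proof -
    have "M p a b \<le> M p (c + \<bar>a-c\<bar>) (d + \<bar>b-d\<bar>)"
      using nn p0 by (intro M_mono) auto
    also have "\<dots> \<le> M p c d + M p \<bar>a-c\<bar> \<bar>b-d\<bar>"
      using nn assms(1) by (intro minkowski) auto
    finally have "\<bar>M p a b - M p c d\<bar> \<le> M p \<bar>a-c\<bar> \<bar>b-d\<bar>" using le by simp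
    then have "\<bar>M p a b - M p c d\<bar> powr p \<le> M p \<bar>a-c\<bar> \<bar>b-d\<bar> powr p"
      using p0 by (intro powr_mono2) auto
    then show ?thesis using M_pow[OF p0] by simp
  qed
  show ?thesis
  proof (cases "M p c d \<le> M p a b")
    case True then show ?thesis using gen assms by blast
  next
    case False
    then have "\<bar>M p c d - M p a b\<bar> powr p \<le> (\<bar>c - a\<bar> powr p + \<bar>d - b\<bar> powr p) / 2"
      using gen assms by simp
    then show ?thesis by (simp add: abs_minus_commute)
  qed
qed

lemma P_split: assumes "4 \<le> n"
  shows "(\<Sum>k=1..<n. \<bar>f k - f (Suc k)\<bar> powr p) = \<bar>f 1 - f 2\<bar> powr p + \<bar>f 2 - f 3\<bar> powr p
    + \<bar>f 3 - f 4\<bar> powr p + (\<Sum>k=4..<n. \<bar>f k - f (Suc k)\<bar> powr p)"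
proof -
  have e: "{1..<n} = insert 1 (insert 2 (insert 3 {4..<n}))" using assms by auto
  have s1: "Suc 1 = (2::nat)" "Suc 2 = (3::nat)" "Suc 3 = (4::nat)" by simp_all
  have "(\<Sum>k\<in>insert 1 (insert 2 (insert 3 {4..<n})). \<bar>f k - f (Suc k)\<bar> powr p)
     = \<bar>f 1 - f (Suc 1)\<bar> powr p + (\<bar>f 2 - f (Suc 2)\<bar> powr p + (\<bar>f 3 - f (Suc 3)\<bar> powr p
       + (\<Sum>k=4..<n. \<bar>f k - f (Suc k)\<bar> powr p)))"
    by (subst sum.insert; simp)+
  then show ?thesis unfolding e s1 by (simp only: add.assoc)
qed

lemma R4: assumes "5 \<le> n"
  shows "rayleigh (tadpole_V n) (tadpole_E n 4) p f = N4 n p f / Dn n p f"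
proof -
  have "rayleigh (tadpole_V n) (tadpole_E n 4) p f
     = ((\<Sum>k=1..<n. \<bar>f k - f (Suc k)\<bar> powr p) + \<bar>f 1 - f 4\<bar> powr p) / Dn n p f"
    by (rule rayleigh_tad) simp
  also have "\<dots> = N4 n p f / Dn n p f"
    using P_split[of n f p] assms by (simp add: N4_def add.assoc)
  finally show ?thesis .
qed

lemma R3: assumes "5 \<le> n"
  shows "rayleigh (tadpole_V n) (tadpole_E n 3) p f
     = (N4 n p f - \<bar>f 1 - f 4\<bar> powr p + \<bar>f 1 - f 3\<bar> powr p) / Dn n p f"
proof -
  have "rayleigh (tadpole_V n) (tadpole_E n 3) p f
     = ((\<Sum>k=1..<n. \<bar>f k - f (Suc k)\<bar> powr p) + \<bar>f 1 - f 3\<bar> powr p) / Dn n p f"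
    by (rule rayleigh_tad) simp
  also have "\<dots> = (N4 n p f - \<bar>f 1 - f 4\<bar> powr p + \<bar>f 1 - f 3\<bar> powr p) / Dn n p f"
    using P_split[of n f p] assms by (simp add: N4_def add.assoc)
  finally show ?thesis .
qed

lemma N4_nonneg: "N4 n p f \<ge> 0"
  unfolding N4_def by (intro add_nonneg_nonneg sum_nonneg) auto

lemma Dn_nonneg: "Dn n p f \<ge> 0"
  unfolding Dn_def by (intro sum_nonneg) auto

lemma N4_cong: assumes "4 \<le> n" "\<And>x. x \<in> {1..n} \<Longrightarrow> f x = g x"
  shows "N4 n p f = N4 n p g"
proof -
  have "(\<Sum>k=4..<n. \<bar>f k - f (Suc k)\<bar> powr p) = (\<Sum>k=4..<n. \<bar>g k - g (Suc k)\<bar> powr p)"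
    using assms by (intro sum.cong) auto
  moreover have "f 1 = g 1" "f 2 = g 2" "f 3 = g 3" "f 4 = g 4" using assms by auto
  ultimately show ?thesis unfolding N4_def by simp
qed

lemma Dn_cong: assumes "\<And>x. x \<in> {1..n} \<Longrightarrow> f x = g x"
  shows "Dn n p f = Dn n p g"
  unfolding Dn_def using assms by (intro sum.cong) auto

lemma scale_term: "c \<ge> 0 \<Longrightarrow> \<bar>c * a - c * b\<bar> powr p = c powr p * \<bar>a - b\<bar> powr (p::real)"
proof -
  assume c: "c \<ge> 0"
  have "\<bar>c * a - c * b\<bar> = c * \<bar>a - b\<bar>" using c
    by (metis abs_mult abs_of_nonneg right_diff_distrib)
  then show ?thesis using c by (simp add: powr_mult)
qed

lemma N4_scale: assumes "c \<ge> 0" shows "N4 n p (\<lambda>x. c * f x) = c powr p * N4 n p f"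
  unfolding N4_def scale_term[OF assms] by (simp add: sum_distrib_left algebra_simps)

lemma Dn_scale: assumes "c \<ge> 0" shows "Dn n p (\<lambda>x. c * f x) = c powr p * Dn n p f"
proof -
  have "\<bar>c * f x\<bar> powr p = c powr p * \<bar>f x\<bar> powr p" for x
    using assms by (simp add: abs_mult powr_mult)
  then show ?thesis unfolding Dn_def by (simp add: sum_distrib_left)
qed

lemma le1_of_powr: fixes x p :: real assumes "p > 0" "0 \<le> x" "x powr p \<le> 1" shows "x \<le> 1"
proof (rule ccontr)
  assume "\<not> x \<le> 1"
  then have "1 powr p < x powr p" using assms by (intro powr_less_mono2) auto
  then show False using assms by simp
qed

lemma Fge:
  fixes n :: nat and p mu :: real
  assumes n: "5 \<le> n" and p: "p > 0"
    and minim: "\<And>y. y \<in> SS n p \<Longrightarrow> mu \<le> N4 n p y" and mu0: "mu \<ge> 0"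
    and hn: "h n = 0"
  shows "mu * Dn n p h \<le> N4 n p h"
proof (cases "Dn n p h = 0")
  case True
  then show ?thesis using N4_nonneg[of n p h] by simp
next
  case False
  define D where "D = Dn n p h"
  have D0: "D > 0" using False Dn_nonneg[of n p h] unfolding D_def by simp
  define c where "c = 1 / D powr (1/p)"
  have c0: "c \<ge> 0" unfolding c_def by simp
  have cp: "c powr p = 1 / D"
  proof -
    have "c powr p = 1 powr p / (D powr (1/p)) powr p" unfolding c_def
      using D0 by (simp add: powr_divide)
    also have "(D powr (1/p)) powr p = D" using D0 p by (simp add: powr_powr)
    finally show ?thesis by simp
  qed
  define h' where "h' x = (if x \<in> {1..n} then c * h x else 0)" for x
  have Dh': "Dn n p h' = 1"
  proof -
    have "Dn n p h' = Dn n p (\<lambda>x. c * h x)" by (rule Dn_cong) (simp add: h'_def)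
    also have "\<dots> = 1" using c0 cp D0 unfolding Dn_scale[OF c0] D_def by simp
    finally show ?thesis .
  qed
  have Nh': "N4 n p h' = N4 n p h / D"
  proof -
    have "N4 n p h' = N4 n p (\<lambda>x. c * h x)" by (rule N4_cong) (use n in \<open>auto simp: h'_def\<close>)
    also have "\<dots> = N4 n p h / D" unfolding N4_scale[OF c0] cp by simp
    finally show ?thesis .
  qed
  have "h' \<in> SS n p"
  proof -
    have le1: "\<bar>h' x\<bar> \<le> 1" if "x \<in> {1..n}" for x
    proof -
      have "\<bar>h' x\<bar> powr p \<le> Dn n p h'" unfolding Dn_def
        by (rule member_le_sum[OF that]) simp_all
      then have "\<bar>h' x\<bar> powr p \<le> 1" using Dh' by simp
      then show ?thesis by (rule le1_of_powr[OF p abs_ge_zero])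
    qed
    have "h' x \<in> (if x \<in> {1..n} then {-1..1} else {0})" for x
    proof (cases "x \<in> {1..n}")
      case True
      then have "\<bar>h' x\<bar> \<le> 1" by (rule le1)
      then have "-1 \<le> h' x \<and> h' x \<le> 1" by (auto simp: abs_le_iff)
      then show ?thesis using True by simp
    next
      case False
      have "h' x = 0" unfolding h'_def using False by (simp only: if_False)
      then show ?thesis using False by (simp only: if_False) simp
    qed
    then have "\<forall>x. h' x \<in> (if x \<in> {1..n} then {-1..1} else {0})" by blast
    moreover have "h' n = 0" using hn n by (simp add: h'_def)
    ultimately show ?thesis unfolding SS_def using Dh' by blast
  qed
  then have "mu \<le> N4 n p h / D" using minim[of h'] Nh' by simp
  then have "mu * D \<le> N4 n p h" using D0 by (simp add: pos_le_divide_eq)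
  then show ?thesis unfolding D_def .
qed

lemma exists_min: assumes n: "5 \<le> n" and p: "p > 0"
  shows "\<exists>w\<in>SS n p. \<forall>y\<in>SS n p. N4 n p w \<le> N4 n p y"
proof (rule continuous_attains_inf[OF compact_SS[OF p] _ cont_N4[OF p]])
  define e where "e x = (if x = (1::nat) then 1 else (0::real))" for x
  have ep: "\<bar>e x\<bar> powr p = (if x = 1 then 1 else 0)" for x unfolding e_def by simp
  have "Dn n p e = 1" unfolding Dn_def ep using n by (simp add: sum.delta)
  moreover have "e x \<in> (if x \<in> {1..n} then {-1..1} else {0})" for x
    unfolding e_def using n by auto
  moreover have "e n = 0" unfolding e_def using n by simp
  ultimately have "e \<in> SS n p" unfolding SS_def by blast
  then show "SS n p \<noteq> {}" by blast
qed

lemma abs_min: assumes "w \<in> SS n p" "p > 0"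
  shows "(\<lambda>x. \<bar>w x\<bar>) \<in> SS n p" "N4 n p (\<lambda>x. \<bar>w x\<bar>) \<le> N4 n p w"
proof -
  have t: "\<bar>\<bar>a\<bar> - \<bar>b\<bar>\<bar> powr p \<le> \<bar>a - b\<bar> powr p" for a b :: real
    using assms(2) by (intro powr_mono2) (auto simp: abs_triangle_ineq3)
  have "Dn n p (\<lambda>x. \<bar>w x\<bar>) = Dn n p w" unfolding Dn_def by simp
  moreover have "\<bar>w x\<bar> \<in> (if x \<in> {1..n} then {-1..1} else {0})" for x
  proof -
    have "w x \<in> (if x \<in> {1..n} then {-1..1} else {0})" using assms(1) unfolding SS_def by blast
    then show ?thesis by (cases "x \<in> {1..n}") auto
  qed
  ultimately show "(\<lambda>x. \<bar>w x\<bar>) \<in> SS n p" using assms(1) unfolding SS_def by auto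
  show "N4 n p (\<lambda>x. \<bar>w x\<bar>) \<le> N4 n p w" unfolding N4_def
    by (intro add_mono sum_mono t)
qed

definition sw :: "nat \<Rightarrow> nat" where "sw x = (if x = 1 then 3 else if x = 3 then 1 else x)"

lemma sw_sw: "sw (sw x) = x" unfolding sw_def by auto

lemma sw_in: "3 \<le> n \<Longrightarrow> x \<in> {1..n} \<Longrightarrow> sw x \<in> {1..n}" unfolding sw_def by auto

lemma sum_sw: assumes "3 \<le> n" shows "(\<Sum>x=1..n. g (sw x)) = (\<Sum>x=1..n. (g x :: real))"
  by (rule sum.reindex_bij_witness[of _ sw sw]) (use assms sw_sw sw_in in auto)

lemma N4_sw: assumes "5 \<le> n" shows "N4 n p (\<lambda>x. u (sw x)) = N4 n p u"
proof -
  have "(\<Sum>k=4..<n. \<bar>u (sw k) - u (sw (Suc k))\<bar> powr p) = (\<Sum>k=4..<n. \<bar>u k - u (Suc k)\<bar> powr p)"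
    by (intro sum.cong) (auto simp: sw_def)
  moreover have "sw 1 = 3" "sw 2 = 2" "sw 3 = 1" "sw 4 = 4" by (simp_all add: sw_def)
  ultimately show ?thesis unfolding N4_def by (simp add: abs_minus_commute algebra_simps)
qed

lemma sym:
  fixes n :: nat and p :: real
  assumes n: "5 \<le> n" and p: "1 \<le> p" and u: "u \<in> SS n p" and u0: "\<And>x. u x \<ge> 0"
  defines "v \<equiv> (\<lambda>x. M p (u x) (u (sw x)))"
  shows "v \<in> SS n p" "N4 n p v \<le> N4 n p u" "v 1 = v 3" "\<And>x. v x \<ge> 0"
proof -
  have p0: "p > 0" using p by simp
  show v0: "\<And>x. v x \<ge> 0" unfolding v_def by (rule M_nonneg)
  show "v 1 = v 3" unfolding v_def sw_def by (simp add: M_comm)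
  have ed: "\<bar>v a - v b\<bar> powr p \<le> (\<bar>u a - u b\<bar> powr p + \<bar>u (sw a) - u (sw b)\<bar> powr p) / 2" for a b
    unfolding v_def by (rule edge_ineq) (use p u0 in auto)
  have "N4 n p v \<le> (N4 n p u + N4 n p (\<lambda>x. u (sw x))) / 2"
  proof -
    have "(\<Sum>k=4..<n. \<bar>v k - v (Suc k)\<bar> powr p) \<le>
          (\<Sum>k=4..<n. (\<bar>u k - u (Suc k)\<bar> powr p + \<bar>u (sw k) - u (sw (Suc k))\<bar> powr p) / 2)"
      by (intro sum_mono ed)
    also have "\<dots> = ((\<Sum>k=4..<n. \<bar>u k - u (Suc k)\<bar> powr p) + (\<Sum>k=4..<n. \<bar>u (sw k) - u (sw (Suc k))\<bar> powr p)) / 2"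
      by (simp add: sum.distrib sum_divide_distrib[symmetric])
    finally have s: "(\<Sum>k=4..<n. \<bar>v k - v (Suc k)\<bar> powr p) \<le> \<dots>" .
    show ?thesis unfolding N4_def using s ed[of 1 2] ed[of 2 3] ed[of 3 4] ed[of 1 4] by argo
  qed
  then show "N4 n p v \<le> N4 n p u" using N4_sw[OF n] by simp
  have vp: "\<bar>v x\<bar> powr p = (\<bar>u x\<bar> powr p + \<bar>u (sw x)\<bar> powr p) / 2" for x
    using M_pow[OF p0, of "u x" "u (sw x)"] v0[of x] u0[of x] u0[of "sw x"] unfolding v_def by simp
  have Du: "Dn n p u = 1" using u unfolding SS_def by blast
  have "Dn n p v = (Dn n p u + (\<Sum>x=1..n. \<bar>u (sw x)\<bar> powr p)) / 2"
    unfolding Dn_def vp by (simp add: sum.distrib sum_divide_distrib[symmetric])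
  also have "(\<Sum>x=1..n. \<bar>u (sw x)\<bar> powr p) = Dn n p u" unfolding Dn_def
    by (rule sum_sw[of n "\<lambda>y. \<bar>u y\<bar> powr p"]) (use n in simp)
  finally have Dv: "Dn n p v = 1" using Du by simp
  have urng: "u x \<in> (if x \<in> {1..n} then {-1..1} else {0})" for x using u unfolding SS_def by blast
  have vrng: "v x \<in> (if x \<in> {1..n} then {-1..1} else {0})" for x
  proof (cases "x \<in> {1..n}")
    case True
    then have "sw x \<in> {1..n}" using n sw_in[of n x] by simp
    then have "\<bar>u x\<bar> \<le> 1" "\<bar>u (sw x)\<bar> \<le> 1" using urng[of x] urng[of "sw x"] True by auto
    then have "\<bar>u x\<bar> powr p \<le> 1" "\<bar>u (sw x)\<bar> powr p \<le> 1" using p0 by (auto intro!: powr_le1)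
    then have "\<bar>v x\<bar> powr p \<le> 1" unfolding vp by simp
    then have "\<bar>v x\<bar> \<le> 1" by (rule le1_of_powr[OF p0 abs_ge_zero])
    then show ?thesis using True v0[of x] by simp
  next
    case False
    then have "x \<noteq> 1" "x \<noteq> 3" using n by auto
    then have "sw x = x" unfolding sw_def by simp
    moreover have "u x = 0" using urng[of x] False by (simp only: if_False) simp
    ultimately have "v x = 0" unfolding v_def M_def using p0 by simp
    then show ?thesis using False by simp
  qed
  have "sw n = n" using n unfolding sw_def by simp
  then have "v n = 0" using u unfolding v_def M_def SS_def using p0 by simp
  then show "v \<in> SS n p" unfolding SS_def using Dv vrng by blast
qed

lemma Dn_upd: assumes "j \<in> {1..n}"
  shows "Dn n p (f(j:=t)) = Dn n p f - \<bar>f j\<bar> powr p + \<bar>t\<bar> powr p"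
proof -
  have a: "Dn n p (f(j:=t)) = \<bar>t\<bar> powr p + (\<Sum>x\<in>{1..n}-{j}. \<bar>(f(j:=t)) x\<bar> powr p)"
    unfolding Dn_def using assms by (subst sum.remove[of _ j]) auto
  have b: "Dn n p f = \<bar>f j\<bar> powr p + (\<Sum>x\<in>{1..n}-{j}. \<bar>f x\<bar> powr p)"
    unfolding Dn_def using assms by (subst sum.remove[of _ j]) auto
  have c: "(\<Sum>x\<in>{1..n}-{j}. \<bar>(f(j:=t)) x\<bar> powr p) = (\<Sum>x\<in>{1..n}-{j}. \<bar>f x\<bar> powr p)"
    by (intro sum.cong) auto
  show ?thesis using a b c by simp
qed

lemma tail_upd: assumes "j < 4"
  shows "(\<Sum>k=4..<n. \<bar>(f(j:=t)) k - (f(j:=t)) (Suc k)\<bar> powr p) = (\<Sum>k=4..<n. \<bar>f k - f (Suc k)\<bar> powr p)"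
  using assms by (intro sum.cong) auto

lemma N4_upd1: "N4 n p (f(1:=t)) = \<bar>t - f 2\<bar> powr p + \<bar>f 2 - f 3\<bar> powr p + \<bar>f 3 - f 4\<bar> powr p
   + \<bar>t - f 4\<bar> powr p + (\<Sum>k=4..<n. \<bar>f k - f (Suc k)\<bar> powr p)"
  unfolding N4_def tail_upd[of 1, simplified] by simp

lemma N4_upd2: "N4 n p (f(2:=t)) = \<bar>f 1 - t\<bar> powr p + \<bar>t - f 3\<bar> powr p + \<bar>f 3 - f 4\<bar> powr p
   + \<bar>f 1 - f 4\<bar> powr p + (\<Sum>k=4..<n. \<bar>f k - f (Suc k)\<bar> powr p)"
  unfolding N4_def tail_upd[of 2, simplified] by simp

lemma sum_diff_sub:
  fixes g h :: "nat \<Rightarrow> real"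
  assumes "finite A" "B \<subseteq> A" "\<And>i. i \<in> A - B \<Longrightarrow> g i = h i"
  shows "sum g A = sum h A + sum (\<lambda>i. g i - h i) B"
proof -
  have "sum g A - sum h A = sum (\<lambda>i. g i - h i) A" by (simp add: sum_subtractf)
  also have "\<dots> = sum (\<lambda>i. g i - h i) B"
    using assms by (intro sum.mono_neutral_right) auto
  finally show ?thesis by simp
qed

lemma path_perturb:
  fixes f :: "nat \<Rightarrow> real"
  assumes k: "4 \<le> k" "k < n" and f: "f (k-1) = 0" "f k = 0" "f 1 = 0" "f 3 = 0" "f (Suc k) = c"
    and e: "0 \<le> e" "e \<le> c" and p: "p > 0"
  shows "N4 n p (f(k:=e)) \<le> N4 n p f + 2 * e powr p + (c - e) powr p - c powr p"
proof -
  define h where "h = f(k:=e)"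
  define T where "T g i = \<bar>g i - g (Suc i)\<bar> powr p" for g :: "nat \<Rightarrow> real" and i
  have Tk: "T h k - T f k = (c - e) powr p - c powr p"
    unfolding T_def h_def using f e by (simp add: abs_minus_commute)
  show ?thesis
  proof (cases "k = 4")
    case True
    have sd: "(\<Sum>i=4..<n. T h i) = (\<Sum>i=4..<n. T f i) + (\<Sum>i\<in>{4}. T h i - T f i)"
      by (rule sum_diff_sub) (use k True in \<open>auto simp: T_def h_def\<close>)
    have "N4 n p h = \<bar>f 1 - f 2\<bar> powr p + \<bar>f 2 - f 3\<bar> powr p + e powr p + e powr p + (\<Sum>i=4..<n. T h i)"
      unfolding N4_def T_def h_def using True f e by simp
    moreover have "N4 n p f = \<bar>f 1 - f 2\<bar> powr p + \<bar>f 2 - f 3\<bar> powr p + 0 + 0 + (\<Sum>i=4..<n. T f i)"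
      unfolding N4_def T_def using True f p by simp
    ultimately show ?thesis using sd Tk True unfolding h_def by simp
  next
    case False
    then have k5: "5 \<le> k" using k by simp
    have sd: "(\<Sum>i=4..<n. T h i) = (\<Sum>i=4..<n. T f i) + (\<Sum>i\<in>{k-1,k}. T h i - T f i)"
      by (rule sum_diff_sub) (use k k5 in \<open>auto simp: T_def h_def\<close>)
    have Tk1: "T h (k-1) - T f (k-1) = e powr p"
      unfolding T_def h_def using f e k5 p by simp
    have c4: "h 1 = f 1" "h 2 = f 2" "h 3 = f 3" "h 4 = f 4" unfolding h_def using k5 by auto
    have "N4 n p h = \<bar>f 1 - f 2\<bar> powr p + \<bar>f 2 - f 3\<bar> powr p + \<bar>f 3 - f 4\<bar> powr p
       + \<bar>f 1 - f 4\<bar> powr p + (\<Sum>i=4..<n. T h i)"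
      unfolding N4_def T_def c4 ..
    moreover have "N4 n p f = \<bar>f 1 - f 2\<bar> powr p + \<bar>f 2 - f 3\<bar> powr p + \<bar>f 3 - f 4\<bar> powr p
       + \<bar>f 1 - f 4\<bar> powr p + (\<Sum>i=4..<n. T f i)"
      unfolding N4_def T_def ..
    moreover have "(\<Sum>i\<in>{k-1,k}. T h i - T f i) = e powr p + ((c - e) powr p - c powr p)"
      using k5 Tk Tk1 by simp
    ultimately show ?thesis using sd unfolding h_def using powr_ge_zero[of e p] by simp
  qed
qed

lemma pow_split: fixes x q :: real assumes "x > 0" shows "x powr (1 + q) = x * x powr q"
  using assms by (simp add: powr_add)

lemma small_path: fixes p c :: real assumes p: "p > 1" and c: "c > 0"
  shows "\<exists>e. 0 \<le> e \<and> e \<le> c \<and> 2 * e powr p + (c - e) powr p - c powr p < 0"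
proof -
  define q where "q = p - 1"
  have q: "q > 0" "p = 1 + q" using p unfolding q_def by auto
  define e where "e = (c/2) * (1/4) powr (1/q)"
  have r1: "(1/4::real) powr (1/q) \<le> 1" using q by (intro powr_le1) auto
  have r0: "(1/4::real) powr (1/q) > 0" by simp
  have e0: "e > 0" unfolding e_def using c r0 by simp
  have ec: "e \<le> c/2" unfolding e_def using c r1 by (simp add: mult_left_le)
  have eq: "e powr q = (c/2) powr q * (1/4)"
  proof -
    have "e powr q = (c/2) powr q * ((1/4::real) powr (1/q)) powr q"
      unfolding e_def by (rule powr_mult)
    also have "((1/4::real) powr (1/q)) powr q = 1/4"
    proof -
      have "1/q * q = 1" using q by simp
      then show ?thesis by (simp add: powr_powr)
    qed
    finally show ?thesis .
  qed
  have ce: "c - e > 0" "c - e \<ge> c/2" using ec c by auto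
  have m1: "(c - e) powr q \<le> c powr q" using ce q e0 by (intro powr_mono2) auto
  have m2: "(c/2) powr q \<le> (c - e) powr q" using ce q c by (intro powr_mono2) auto
  have "c powr p - (c - e) powr p = c * c powr q - (c - e) * (c - e) powr q"
    unfolding q(2) using c ce by (simp add: pow_split)
  also have "\<dots> \<ge> c * (c - e) powr q - (c - e) * (c - e) powr q"
    using m1 c by (simp add: mult_left_mono)
  finally have "c powr p - (c - e) powr p \<ge> e * (c - e) powr q" by (simp add: algebra_simps)
  moreover have "e * (c - e) powr q \<ge> e * (c/2) powr q" using m2 e0 by (simp add: mult_left_mono)
  moreover have "2 * e powr p = e * (c/2) powr q / 2"
    unfolding q(2) using e0 by (simp add: pow_split eq)
  moreover have "e * (c/2) powr q > 0" using e0 c by simp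
  ultimately have "2 * e powr p + (c - e) powr p - c powr p < 0" by linarith
  then show ?thesis using e0 ec c by (intro exI[of _ e]) auto
qed

lemma small_cyc: fixes p a mu :: real assumes p: "p > 1" and a: "a > 0" and mu: "mu > 0"
  shows "\<exists>e. e > 0 \<and> 2 * e powr p - mu * ((a + e) powr p - a powr p) < 0"
proof -
  define q where "q = p - 1"
  have q: "q > 0" "p = 1 + q" using p unfolding q_def by auto
  define e where "e = a * (mu/4) powr (1/q)"
  have e0: "e > 0" unfolding e_def using a mu by simp
  have eq: "e powr q = a powr q * (mu/4)"
  proof -
    have "e powr q = a powr q * ((mu/4) powr (1/q)) powr q"
      unfolding e_def using a mu by (simp add: powr_mult)
    also have "((mu/4) powr (1/q)) powr q = mu/4"
    proof -
      have "1/q * q = 1" using q by simp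
      then show ?thesis using mu by (simp add: powr_powr)
    qed
    finally show ?thesis .
  qed
  have m1: "a powr q \<le> (a + e) powr q" using a e0 q by (intro powr_mono2) auto
  have "(a + e) powr p - a powr p = (a + e) * (a + e) powr q - a * a powr q"
    unfolding q(2) using a e0 by (simp add: pow_split)
  also have "\<dots> \<ge> (a + e) * a powr q - a * a powr q"
    using m1 a e0 by (simp add: mult_left_mono)
  finally have "(a + e) powr p - a powr p \<ge> e * a powr q" by (simp add: algebra_simps)
  then have A: "mu * ((a + e) powr p - a powr p) \<ge> mu * (e * a powr q)"
    using mu by (simp add: mult_left_mono)
  have B: "2 * e powr p = mu * (e * a powr q) / 2"
    unfolding q(2) using e0 by (simp add: pow_split eq)
  have C: "mu * (e * a powr q) > 0" using mu e0 a by simp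
  show ?thesis using A B C e0 by (intro exI[of _ e]) linarith
qed

lemma mid_ineq: fixes p d :: real assumes p: "p > 1" and d: "d > 0"
  shows "2 * (d/2) powr p < d powr p"
proof -
  have "(2::real) powr 1 < 2 powr p" using p by (intro powr_less_mono) auto
  then have t: "2 < (2::real) powr p" by simp
  have X: "(d/2) powr p > 0" using d by simp
  have "d powr p = (2 * (d/2)) powr p" by simp
  also have "\<dots> = 2 powr p * (d/2) powr p" by (rule powr_mult)
  finally have "d powr p = 2 powr p * (d/2) powr p" .
  moreover have "2 * (d/2) powr p < 2 powr p * (d/2) powr p"
    using t X by (intro mult_strict_right_mono) auto
  ultimately show ?thesis by simp
qed

lemma chain:
  fixes f :: "nat \<Rightarrow> real"
  assumes s: "(\<Sum>k=4..<n. \<bar>f k - f (Suc k)\<bar> powr p) = 0" and n: "4 \<le> n"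
  shows "f 4 = f n"
proof -
  have "\<forall>k\<in>{4..<n}. \<bar>f k - f (Suc k)\<bar> powr p = 0"
    using s by (subst sum_nonneg_eq_0_iff[symmetric]) auto
  then have st: "f k = f (Suc k)" if "4 \<le> k" "k < n" for k using that by auto
  have "4 + m \<le> n \<longrightarrow> f 4 = f (4 + m)" for m
  proof (induction m)
    case 0 then show ?case by simp
  next
    case (Suc m)
    then show ?case using st[of "4 + m"] by auto
  qed
  from this[of "n - 4"] n show ?thesis by simp
qed

theorem lemma2p3:
  fixes n :: nat and p :: real
  assumes "n \<ge> 5" and "p > 1"
  shows "lambda1p (tadpole_V n) (tadpole_E n 4) p > lambda1p (tadpole_V n) (tadpole_E n 3) p"
proof -
  have n: "5 \<le> n" using assms by simp
  have p: "p > 1" using assms by simp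
  have p0: "p > 0" and p1: "1 \<le> p" using p by auto
  obtain w where w: "w \<in> SS n p" and wmin: "\<forall>y\<in>SS n p. N4 n p w \<le> N4 n p y"
    using exists_min[OF n p0] by blast
  define mu where "mu = N4 n p w"
  have minim: "\<And>y. y \<in> SS n p \<Longrightarrow> mu \<le> N4 n p y" using wmin unfolding mu_def by blast
  have mu0: "mu \<ge> 0" unfolding mu_def by (rule N4_nonneg)
  have Fh: "\<And>h. h n = 0 \<Longrightarrow> mu * Dn n p h \<le> N4 n p h"
    by (rule Fge[OF n p0 minim mu0]) auto
  define u where "u = (\<lambda>x. \<bar>w x\<bar>)"
  have u: "u \<in> SS n p" "N4 n p u \<le> mu"
    using abs_min[OF w p0] unfolding u_def mu_def by auto
  have u0: "\<And>x. u x \<ge> 0" unfolding u_def by simp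
  define v where "v = (\<lambda>x. M p (u x) (u (sw x)))"
  have v: "v \<in> SS n p" "N4 n p v \<le> N4 n p u" "v 1 = v 3" "\<And>x. v x \<ge> 0"
    using sym[OF n p1 u(1) u0] unfolding v_def by auto
  have Nv: "N4 n p v = mu" using minim[OF v(1)] v(2) u(2) by simp
  have Dv: "Dn n p v = 1" and vn: "v n = 0" using v(1) unfolding SS_def by auto
  have vrng: "v x \<in> (if x \<in> {1..n} then {-1..1} else {0})" for x using v(1) unfolding SS_def by blast
  have vnz: "\<exists>x\<in>{1..n}. v x \<noteq> 0"
  proof (rule ccontr)
    assume "\<not> ?thesis"
    then have "Dn n p v = 0" unfolding Dn_def by simp
    then show False using Dv by simp
  qed
  have R4ge: "\<And>f. f n = 0 \<Longrightarrow> (\<exists>x\<in>{1..n}. f x \<noteq> 0) \<Longrightarrow> mu \<le> N4 n p f / Dn n p f"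
  proof -
    fix f :: "nat \<Rightarrow> real" assume fn: "f n = 0" and ex: "\<exists>x\<in>{1..n}. f x \<noteq> 0"
    then obtain x where x: "x \<in> {1..n}" "f x \<noteq> 0" by blast
    have "\<bar>f x\<bar> powr p \<le> Dn n p f" unfolding Dn_def by (rule member_le_sum[OF x(1)]) simp_all
    moreover have "\<bar>f x\<bar> powr p > 0" using x by simp
    ultimately have "Dn n p f > 0" by linarith
    then show "mu \<le> N4 n p f / Dn n p f" using Fh[of f, OF fn] by (simp add: pos_le_divide_eq)
  qed
  have CB4: "CB (tadpole_V n) (tadpole_E n 4) = {f. f n = 0}" using CB_tad[of 4 n] n by simp
  have CB3: "CB (tadpole_V n) (tadpole_E n 3) = {f. f n = 0}" using CB_tad[of 3 n] n by simp
  have lam4: "mu \<le> lambda1p (tadpole_V n) (tadpole_E n 4) p"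
    unfolding lambda1p_def
  proof (rule cInf_greatest, goal_cases)
    case 1
    have "rayleigh (tadpole_V n) (tadpole_E n 4) p v \<in> {rayleigh (tadpole_V n) (tadpole_E n 4) p f |f. f \<in> CB (tadpole_V n) (tadpole_E n 4) \<and> (\<exists>x\<in>tadpole_V n. f x \<noteq> 0)}"
      using vn vnz unfolding CB4 unfolding tadpole_V_def by blast
    then show ?case by blast
  next
    case (2 r)
    then obtain f where f: "r = rayleigh (tadpole_V n) (tadpole_E n 4) p f" "f \<in> CB (tadpole_V n) (tadpole_E n 4)"
      "\<exists>x\<in>tadpole_V n. f x \<noteq> 0" by blast
    then have "f n = 0" "\<exists>x\<in>{1..n}. f x \<noteq> 0" unfolding CB4 unfolding tadpole_V_def by auto
    then show ?case using R4ge[of f] R4[OF n, of p f] f(1) by simp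
  qed
  have bdd: "bdd_below {rayleigh (tadpole_V n) (tadpole_E n 3) p f |f. f \<in> CB (tadpole_V n) (tadpole_E n 3) \<and> (\<exists>x\<in>tadpole_V n. f x \<noteq> 0)}"
  proof (rule bdd_belowI[of _ 0])
    fix r assume "r \<in> {rayleigh (tadpole_V n) (tadpole_E n 3) p f |f. f \<in> CB (tadpole_V n) (tadpole_E n 3) \<and> (\<exists>x\<in>tadpole_V n. f x \<noteq> 0)}"
    then obtain f where "r = rayleigh (tadpole_V n) (tadpole_E n 3) p f" by blast
    then show "0 \<le> r" unfolding rayleigh_def
      by (auto intro!: divide_nonneg_nonneg sum_nonneg)
  qed
  have lam3: "lambda1p (tadpole_V n) (tadpole_E n 3) p \<le> rayleigh (tadpole_V n) (tadpole_E n 3) p g"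
    if "g n = 0" "\<exists>x\<in>{1..n}. g x \<noteq> 0" for g
    unfolding lambda1p_def
  proof (rule cInf_lower[OF _ bdd])
    show "rayleigh (tadpole_V n) (tadpole_E n 3) p g \<in> {rayleigh (tadpole_V n) (tadpole_E n 3) p f |f. f \<in> CB (tadpole_V n) (tadpole_E n 3) \<and> (\<exists>x\<in>tadpole_V n. f x \<noteq> 0)}"
      using that unfolding CB3 unfolding tadpole_V_def by blast
  qed
  have key: "\<exists>g. g n = 0 \<and> (\<exists>x\<in>{1..n}. g x \<noteq> 0) \<and> rayleigh (tadpole_V n) (tadpole_E n 3) p g < mu"
  proof (cases "v 1 = v 4")
    case False
    have "\<bar>v 1 - v 4\<bar> powr p > 0" using False by simp
    then have "rayleigh (tadpole_V n) (tadpole_E n 3) p v < mu"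
      unfolding R3[OF n] Nv Dv using v(3) p0 by simp
    then show ?thesis using vn vnz by blast
  next
    case True
    define a where "a = v 1"
    define b where "b = v 2"
    have v134: "v 1 = a" "v 3 = a" "v 4 = a" using True v(3) unfolding a_def by auto
    have a0: "a \<ge> 0" "b \<ge> 0" unfolding a_def b_def using v(4) by auto
    define S where "S = (\<Sum>k=4..<n. \<bar>v k - v (Suc k)\<bar> powr p)"
    have S0: "S \<ge> 0" unfolding S_def by (intro sum_nonneg) auto
    have NvS: "N4 n p v = 2 * \<bar>a - b\<bar> powr p + S"
      unfolding N4_def S_def v134 b_def[symmetric] using p0 by (simp add: abs_minus_commute)
    have False
    proof (cases "b < a")
      case True
      define h where "h = v(2 := a)"
      have "N4 n p h = S" unfolding h_def N4_upd2 v134 S_def using p0 by simp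
      moreover have "Dn n p h = 1 - \<bar>b\<bar> powr p + \<bar>a\<bar> powr p"
        unfolding h_def using Dn_upd[of 2 n p v a] n Dv b_def by simp
      moreover have "\<bar>b\<bar> powr p \<le> \<bar>a\<bar> powr p" using True a0 p0 by (intro powr_mono2) auto
      moreover have "h n = 0" unfolding h_def using vn n by simp
      moreover have "\<bar>a - b\<bar> powr p > 0" using True by simp
      ultimately have "1 \<le> Dn n p h" "N4 n p h < mu" "h n = 0" using NvS Nv by linarith+
      moreover have "mu \<le> mu * Dn n p h" using mult_left_mono[OF \<open>1 \<le> Dn n p h\<close> mu0] by simp
      ultimately show False using Fh[of h] by linarith
    next
      case False
      then have ba: "a \<le> b" by simp
      show False
      proof (cases "a < b")
        case True
        define t where "t = (a + b) / 2"
        define h where "h = v(1 := t)"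
        have tb: "\<bar>t - b\<bar> = (b - a) / 2" "\<bar>t - a\<bar> = (b - a) / 2" unfolding t_def using True by auto
        have "N4 n p h = 2 * ((b - a)/2) powr p + \<bar>b - a\<bar> powr p + S"
          unfolding h_def N4_upd1 v134 S_def b_def[symmetric] tb using p0 by simp
        moreover have "Dn n p h = 1 - \<bar>a\<bar> powr p + \<bar>t\<bar> powr p"
          unfolding h_def using Dn_upd[of 1 n p v t] n Dv v134 by simp
        moreover have "\<bar>a\<bar> powr p \<le> \<bar>t\<bar> powr p" using True a0 p0 unfolding t_def by (intro powr_mono2) auto
        moreover have "h n = 0" unfolding h_def using vn n by simp
        moreover have "2 * ((b - a)/2) powr p < (b - a) powr p" using mid_ineq[OF p] True by simp
        moreover have "\<bar>b - a\<bar> = b - a" "\<bar>a - b\<bar> = b - a" using True by auto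
        ultimately have "1 \<le> Dn n p h" "N4 n p h < mu" "h n = 0" using NvS Nv by auto
        moreover have "mu \<le> mu * Dn n p h" using mult_left_mono[OF \<open>1 \<le> Dn n p h\<close> mu0] by simp
        ultimately show False using Fh[of h] by linarith
      next
        case False
        then have ab: "b = a" using ba by simp
        have Nv0: "N4 n p v = S" using NvS ab p0 by simp
        show False
        proof (cases "a > 0")
          case True
          have mupos: "mu > 0"
          proof (rule ccontr)
            assume "\<not> mu > 0"
            then have "S = 0" using mu0 Nv Nv0 by simp
            then have "v 4 = v n" using chain[of v p n] n unfolding S_def by simp
            then show False using v134 vn True by simp
          qed
          obtain e where e: "e > 0" "2 * e powr p - mu * ((a + e) powr p - a powr p) < 0"
            using small_cyc[OF p True mupos] by blast
          define h where "h = v(2 := a + e)"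
          have "N4 n p h = 2 * e powr p + S" unfolding h_def N4_upd2 v134 S_def using e p0 by simp
          moreover have Dh: "Dn n p h = 1 - a powr p + (a + e) powr p"
            unfolding h_def using Dn_upd[of 2 n p v "a + e"] n Dv b_def ab a0 e by simp
          moreover have "h n = 0" unfolding h_def using vn n by simp
          moreover have "mu * Dn n p h = mu + mu * ((a + e) powr p - a powr p)"
            unfolding Dh by (simp add: algebra_simps)
          ultimately show False using Fh[of h] Nv Nv0 e(2) by linarith
        next
          case False
          then have a00: "a = 0" using a0 by simp
          have "\<exists>j. v j \<noteq> 0" using vnz by blast
          then obtain j where j: "v j \<noteq> 0" and jl: "\<And>i. i < j \<Longrightarrow> v i = 0"
            using exists_least_iff[of "\<lambda>j. v j \<noteq> 0"] by blast
          have jr: "j \<in> {1..n}"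
          proof (rule ccontr)
            assume "j \<notin> {1..n}"
            then have "v j = 0" using vrng[of j] by (simp only: if_False) simp
            then show False using j by simp
          qed
          have "j \<noteq> 1" "j \<noteq> 2" "j \<noteq> 3" "j \<noteq> 4" "j \<noteq> n"
            using j v134 a00 ab b_def vn by auto
          then have j5: "5 \<le> j" "j < n" using jr by auto
          define k where "k = j - 1"
          have k: "4 \<le> k" "k < n" "Suc k = j" unfolding k_def using j5 by auto
          define c where "c = v j"
          have c0: "c > 0" unfolding c_def using j v(4)[of j] by simp
          obtain e where e: "0 \<le> e" "e \<le> c" "2 * e powr p + (c - e) powr p - c powr p < 0"
            using small_path[OF p c0] by blast
          define h where "h = v(k := e)"
          have "N4 n p h \<le> N4 n p v + 2 * e powr p + (c - e) powr p - c powr p"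
            unfolding h_def
            by (rule path_perturb[OF k(1,2) _ _ _ _ _ e(1,2) p0])
               (use jl k v134 a00 c_def in auto)
          moreover have "Dn n p h = 1 + \<bar>e\<bar> powr p"
            unfolding h_def using Dn_upd[of k n p v e] k Dv jl[of k] by simp
          moreover have "h n = 0" unfolding h_def using vn k by simp
          ultimately have "1 \<le> Dn n p h" "N4 n p h < mu" "h n = 0" using Nv e(3) powr_ge_zero[of "\<bar>e\<bar>" p] by linarith+
          moreover have "mu \<le> mu * Dn n p h" using mult_left_mono[OF \<open>1 \<le> Dn n p h\<close> mu0] by simp
          ultimately show False using Fh[of h] by linarith
        qed
      qed
    qed
    then show ?thesis by simp
  qed
  then obtain g where "g n = 0" "\<exists>x\<in>{1..n}. g x \<noteq> 0" "rayleigh (tadpole_V n) (tadpole_E n 3) p g < mu"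
    by blast
  then show ?thesis using lam3[of g] lam4 by simp
qed


end
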